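(* Let $a_0,a_1,\dots,a_k\ge 0$, $\delta>1$ and $m>0$ be real numbers, and let $r=m^{-1/(\delta-1)}$. If $s=\sum_{i=0}^k a_i\ge 1$ and $a_i\le rs$ for all $1\le i\le k$, then $$m\big(a_0+c a_1^\delta+\dots+c a_k^\delta\big)\le c s^\delta$$ for every $c\ge m$. *)

theory Defs
  imports Complex_Main
begin

end

theory Submission
  imports Defs
begin

theorem lemma2p6:
  fixes a :: "nat \<Rightarrow> real" and k :: nat and \<delta> m r s c :: real
  assumes nonneg: "\<And>i. i \<le> k \<Longrightarrow> a i \<ge> 0"
    and delta: "\<delta> > 1" and mpos: "m > 0"
    and r_def: "r = m powr (-1 / (\<delta> - 1))"
    and s_def: "s = (\<Sum>i=0..k. a i)"
    and s_ge: "s \<ge> 1"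
    and a_le: "\<And>i. 1 \<le> i \<Longrightarrow> i \<le> k \<Longrightarrow> a i \<le> r * s"
    and c_ge: "c \<ge> m"
  shows "m * (a 0 + (\<Sum>i=1..k. c * a i powr \<delta>)) \<le> c * s powr \<delta>"
proof -
  define t where "t = s powr (\<delta> - 1)"
  have rpos: "r > 0" using r_def mpos by simp
  have t1: "t \<ge> 1" unfolding t_def using s_ge delta by (simp add: ge_one_powr_ge_zero)
  have rp: "r powr (\<delta> - 1) = 1 / m"
  proof -
    have "r powr (\<delta> - 1) = m powr (-1 / (\<delta> - 1) * (\<delta> - 1))"
      using r_def by (simp add: powr_powr)
    also have "\<dots> = m powr (-1)" using delta by simp
    finally show ?thesis using mpos by (simp add: powr_minus_divide)
  qed
  have cpos: "c > 0" using c_ge mpos by simp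
  have key: "m * (c * a i powr \<delta>) \<le> c * (a i * t)" if i: "1 \<le> i" "i \<le> k" for i
  proof (cases "a i = 0")
    case True then show ?thesis using cpos by simp
  next
    case False
    hence ap: "a i > 0" using nonneg i by force
    have e: "a i powr \<delta> = a i * a i powr (\<delta> - 1)"
      using ap by (simp add: powr_diff)
    have "a i powr (\<delta> - 1) \<le> (r * s) powr (\<delta> - 1)"
      using ap a_le[OF i] delta by (intro powr_mono2) auto
    also have "\<dots> = t / m" unfolding t_def using rpos s_ge
      by (simp add: powr_mult rp)
    finally have "m * a i powr (\<delta> - 1) \<le> t" using mpos by (simp add: field_simps)
    hence "m * (a i * a i powr (\<delta> - 1)) \<le> a i * t" using ap
      by (metis mult.left_commute mult_left_mono less_imp_le)
    then show ?thesis unfolding e using cpos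
      by (metis mult.left_commute mult_left_mono less_imp_le)
  qed
  have a0: "m * a 0 \<le> c * (a 0 * t)"
  proof -
    have "a 0 \<ge> 0" using nonneg by simp
    hence "m * a 0 \<le> c * a 0" using c_ge by (simp add: mult_right_mono)
    also have "\<dots> \<le> c * (a 0 * t)" using \<open>a 0 \<ge> 0\<close> cpos t1
      by (intro mult_left_mono) (auto simp: mult_le_cancel_left1)
    finally show ?thesis .
  qed
  have "m * (a 0 + (\<Sum>i=1..k. c * a i powr \<delta>)) = m * a 0 + (\<Sum>i=1..k. m * (c * a i powr \<delta>))"
    by (simp add: distrib_left sum_distrib_left)
  also have "\<dots> \<le> c * (a 0 * t) + (\<Sum>i=1..k. c * (a i * t))"
    using a0 key by (intro add_mono sum_mono) auto
  also have "\<dots> = c * t * (a 0 + (\<Sum>i=1..k. a i))"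
    by (simp add: sum_distrib_left algebra_simps)
  also have "a 0 + (\<Sum>i=1..k. a i) = s"
    unfolding s_def by (simp add: sum.atLeast_Suc_atMost)
  also have "c * t * s = c * s powr \<delta>"
    unfolding t_def using s_ge by (simp add: powr_diff)
  finally show ?thesis .
qed

end
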